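(* Let $k\in\mathbb{N}$, let $G$ be a digraph and $\mathcal{P}_k=\{V_{ij}:i,j\in[k]\}$ a $k^2$-partition of $V(G)$. Let $\mathcal{Q}$ be a path system all of whose edges lie in $\mathcal{B}_k(\mathcal{P}_k,G)$ such that for all $i\in[k]$, $$\sum_{j\neq i}a_{ij}-\sum_{j\neq i}a_{ji}=|V_{i*}|-|V_{*i}|,$$ where $a_{ij}=|E(\mathcal{Q})\cap E(V_{i*},V_{*j})|$ for $i\neq j$. Then contracting $\mathcal{Q}$ in $G$ with respect to $\mathcal{P}_k$ yields a digraph $G'$ with a $k^2$-partition $\mathcal{P}'_k=\{V'_{ij}:i,j\in[k]\}$ such that $|V'_{i*}|=|V'_{*i}|$ for all $i\in[k]$.
   Context: A path system is a set of vertex-disjoint directed paths. A $k^2$-partition of $V(G)$ is a family $\{V_{ij}:i,j\in[k]\}$ of pairwise disjoint (possibly empty) sets with union $V(G)$; $V_{i*}=\bigcup_jV_{ij}$, $V_{*j}=\bigcup_iV_{ij}$; $E(A,B)$ is the set of edges $ab$ with $a\in A,b\in B$; bad edges $\mathcal{B}_k(\mathcal{P}_k,G)=\bigcup_{i\neq j}E(V_{i*},V_{*j})$. Contraction: for each path $Q\in\mathcal{Q}$ from $u$ to $v$ create a new vertex $x_Q$; $V(G')=(V(G)\setminus V(\mathcal{Q}))\cup\{x_Q\}$. For $y\in V(G')$ put $y^-=y^+=y$ if $y\in V(G)$ and $x_Q^-=u$, $x_Q^+=v$; $yz\in E(G')$ iff $y^+z^-\in E(G)$. The resulting partition $\mathcal{P}'_k$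 has $V'_{ij}$ equal to $V_{ij}\setminus V(\mathcal{Q})$ together with all $x_Q$ for which $Q$ goes from $u\in V_{*j}$ to $v\in V_{i*}$; $V'_{i*},V'_{*j}$ are defined analogously. *)

theory Defs
  imports Main
begin

definition rowset :: "(nat \<Rightarrow> nat \<Rightarrow> 'v set) \<Rightarrow> nat \<Rightarrow> nat \<Rightarrow> 'v set" where
  "rowset P k i = (\<Union>j\<in>{1..k}. P i j)"

definition colset :: "(nat \<Rightarrow> nat \<Rightarrow> 'v set) \<Rightarrow> nat \<Rightarrow> nat \<Rightarrow> 'v set" where
  "colset P k j = (\<Union>i\<in>{1..k}. P i j)"

definition k2_partition :: "'v set \<Rightarrow> nat \<Rightarrow> (nat \<Rightarrow> nat \<Rightarrow> 'v set) \<Rightarrow> bool" where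
  "k2_partition V k P \<longleftrightarrow>
     (\<forall>i\<in>{1..k}. \<forall>j\<in>{1..k}. \<forall>i'\<in>{1..k}. \<forall>j'\<in>{1..k}.
        (i, j) \<noteq> (i', j') \<longrightarrow> P i j \<inter> P i' j' = {}) \<and>
     (\<Union>i\<in>{1..k}. \<Union>j\<in>{1..k}. P i j) = V"

definition Eset :: "('a \<times> 'a) set \<Rightarrow> 'a set \<Rightarrow> 'a set \<Rightarrow> ('a \<times> 'a) set" where
  "Eset E A B = {(a, b) \<in> E. a \<in> A \<and> b \<in> B}"

definition bad_edges :: "('a \<times> 'a) set \<Rightarrow> nat \<Rightarrow> (nat \<Rightarrow> nat \<Rightarrow> 'a set) \<Rightarrow> ('a \<times> 'a) set" where
  "bad_edges E k P = (\<Union>i\<in>{1..k}. \<Union>j\<in>{1..k} - {i}. Eset E (rowset P k i) (colset P k j))"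

definition path_edges :: "'a list \<Rightarrow> ('a \<times> 'a) set" where
  "path_edges p = set (zip p (tl p))"

definition is_dpath :: "'a set \<Rightarrow> ('a \<times> 'a) set \<Rightarrow> 'a list \<Rightarrow> bool" where
  "is_dpath V E p \<longleftrightarrow> p \<noteq> [] \<and> distinct p \<and> set p \<subseteq> V \<and> path_edges p \<subseteq> E"

definition path_system :: "'a set \<Rightarrow> ('a \<times> 'a) set \<Rightarrow> 'a list set \<Rightarrow> bool" where
  "path_system V E Q \<longleftrightarrow> (\<forall>p\<in>Q. is_dpath V E p) \<and>
     (\<forall>p\<in>Q. \<forall>q\<in>Q. p \<noteq> q \<longrightarrow> set p \<inter> set q = {})"

definition sys_vertices :: "'a list set \<Rightarrow> 'a set" where
  "sys_vertices Q = (\<Union>p\<in>Q. set p)"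

definition sys_edges :: "'a list set \<Rightarrow> ('a \<times> 'a) set" where
  "sys_edges Q = (\<Union>p\<in>Q. path_edges p)"

text \<open>Contraction: new vertex for path Q is Inr Q; old vertices are Inl v.\<close>
fun vminus :: "'a + 'a list \<Rightarrow> 'a" where
  "vminus (Inl v) = v"
| "vminus (Inr q) = hd q"

fun vplus :: "'a + 'a list \<Rightarrow> 'a" where
  "vplus (Inl v) = v"
| "vplus (Inr q) = last q"

definition contr_V :: "'a set \<Rightarrow> 'a list set \<Rightarrow> ('a + 'a list) set" where
  "contr_V V Q = Inl ` (V - sys_vertices Q) \<union> Inr ` Q"

definition contr_E :: "'a set \<Rightarrow> ('a \<times> 'a) set \<Rightarrow> 'a list set \<Rightarrow> (('a + 'a list) \<times> ('a + 'a list)) set" where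
  "contr_E V E Q = {(y, z). y \<in> contr_V V Q \<and> z \<in> contr_V V Q \<and> (vplus y, vminus z) \<in> E}"

definition contr_part :: "nat \<Rightarrow> (nat \<Rightarrow> nat \<Rightarrow> 'a set) \<Rightarrow> 'a list set \<Rightarrow> nat \<Rightarrow> nat \<Rightarrow> ('a + 'a list) set" where
  "contr_part k P Q i j = Inl ` (P i j - sys_vertices Q) \<union>
     Inr ` {q \<in> Q. hd q \<in> colset P k j \<and> last q \<in> rowset P k i}"

end

theory Submission
  imports Defs
begin

lemma pe_fst: "fst ` path_edges p = set (butlast p)"
proof -
  have "map fst (zip p (tl p)) = butlast p" by (simp add: map_fst_zip_take butlast_conv_take min_def, cases p, auto)
  moreover have "fst ` path_edges p = set (map fst (zip p (tl p)))" by (simp add: path_edges_def)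
  ultimately show ?thesis by simp
qed

lemma pe_snd: "snd ` path_edges p = set (tl p)"
proof -
  have "map snd (zip p (tl p)) = tl p" by (simp add: map_snd_zip_take min_def)
  moreover have "snd ` path_edges p = set (map snd (zip p (tl p)))" by (simp add: path_edges_def)
  ultimately show ?thesis by simp
qed

lemma inj_fst_zip: "distinct xs \<Longrightarrow> inj_on fst (set (zip xs ys))"
  by (auto simp: inj_on_def set_zip nth_eq_iff_index_eq)

lemma inj_snd_zip: "distinct ys \<Longrightarrow> inj_on snd (set (zip xs ys))"
  by (auto simp: inj_on_def set_zip nth_eq_iff_index_eq)

lemma pe_in: assumes "e \<in> path_edges p" shows "fst e \<in> set p \<and> snd e \<in> set p"
proof -
  from assms have "fst e \<in> set p" "snd e \<in> set (tl p)"
    unfolding path_edges_def by (metis prod.collapse set_zip_leftD set_zip_rightD)+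
  then show ?thesis by (cases p) auto
qed

lemma ps_facts:
  assumes "path_system V E Q" "p \<in> Q"
  shows "p \<noteq> []" "distinct p" "set p \<subseteq> V" "path_edges p \<subseteq> E"
  using assms by (auto simp: path_system_def is_dpath_def)

lemma ps_same:
  assumes "path_system V E Q" "p \<in> Q" "q \<in> Q" "x \<in> set p" "x \<in> set q"
  shows "p = q"
  using assms by (auto simp: path_system_def)

lemma ps_finite:
  assumes "path_system V E Q" "finite V"
  shows "finite Q"
proof -
  have "Q \<subseteq> {xs. set xs \<subseteq> V \<and> length xs \<le> card V}"
  proof
    fix p assume "p \<in> Q"
    with ps_facts[OF assms(1)] have "distinct p" "set p \<subseteq> V" by auto
    then have "length p = card (set p)" by (simp add: distinct_card)
    also have "\<dots> \<le> card V" using card_mono[OF assms(2) \<open>set p \<subseteq> V\<close>] .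
    finally show "p \<in> {xs. set xs \<subseteq> V \<and> length xs \<le> card V}" using \<open>set p \<subseteq> V\<close> by blast
  qed
  then show ?thesis using finite_lists_length_le[OF assms(2)] finite_subset by blast
qed

lemma ps_edges_finite:
  assumes "path_system V E Q" "finite V"
  shows "finite (sys_edges Q)"
proof -
  have "sys_edges Q \<subseteq> V \<times> V"
    using ps_facts[OF assms(1)] pe_in by (fastforce simp: sys_edges_def)
  then show ?thesis using assms(2) finite_subset by blast
qed

lemma card_last:
  assumes ps: "path_system V E Q" and fin: "finite V"
  shows "card (A \<inter> sys_vertices Q) = card {q\<in>Q. last q \<in> A} + card {e\<in>sys_edges Q. fst e \<in> A}"
proof -
  let ?F = "sys_edges Q"
  have fQ: "finite Q" using ps_finite[OF ps fin] .
  have fF: "finite ?F" using ps_edges_finite[OF ps fin] .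
  have eq: "A \<inter> sys_vertices Q = last ` {q\<in>Q. last q \<in> A} \<union> fst ` {e\<in>?F. fst e \<in> A}"
  proof
    show "A \<inter> sys_vertices Q \<subseteq> last ` {q\<in>Q. last q \<in> A} \<union> fst ` {e\<in>?F. fst e \<in> A}"
    proof
      fix x assume x: "x \<in> A \<inter> sys_vertices Q"
      then obtain p where p: "p \<in> Q" "x \<in> set p" by (auto simp: sys_vertices_def)
      have ne: "p \<noteq> []" using ps_facts[OF ps p(1)] by auto
      show "x \<in> last ` {q\<in>Q. last q \<in> A} \<union> fst ` {e\<in>?F. fst e \<in> A}"
      proof (cases "x = last p")
        case True then show ?thesis using x p by auto
      next
        case False
        then have "x \<in> set (butlast p)" using p ne
          by (metis append_butlast_last_id in_set_butlast_appendI rotate1.simps(2) set_rotate1 Un_iff empty_iff empty_set list.simps(15) insert_iff set_append)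
        then obtain e where "e \<in> path_edges p" "fst e = x" using pe_fst by (metis imageE)
        then show ?thesis using x p by (force simp: sys_edges_def)
      qed
    qed
    show "last ` {q\<in>Q. last q \<in> A} \<union> fst ` {e\<in>?F. fst e \<in> A} \<subseteq> A \<inter> sys_vertices Q"
    proof
      fix x assume "x \<in> last ` {q\<in>Q. last q \<in> A} \<union> fst ` {e\<in>?F. fst e \<in> A}"
      then consider (a) q where "q \<in> Q" "x = last q" "x \<in> A" | (b) e where "e \<in> ?F" "x = fst e" "x \<in> A" by blast
      then show "x \<in> A \<inter> sys_vertices Q"
      proof cases
        case a
        then have "x \<in> set q" using ps_facts(1)[OF ps a(1)] by simp
        then show ?thesis using a unfolding sys_vertices_def by blast
      next
        case b
        then obtain p where "p \<in> Q" "e \<in> path_edges p" unfolding sys_edges_def by blast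
        then have "x \<in> set p" using pe_in[OF \<open>e \<in> path_edges p\<close>] b(2) by simp
        then show ?thesis using b \<open>p \<in> Q\<close> unfolding sys_vertices_def by blast
      qed
    qed
  qed
  have disj: "last ` {q\<in>Q. last q \<in> A} \<inter> fst ` {e\<in>?F. fst e \<in> A} = {}"
  proof (rule ccontr)
    assume "\<not> ?thesis"
    then obtain q e p where q: "q \<in> Q" and p: "p \<in> Q" "e \<in> path_edges p" and eqx: "last q = fst e"
      by (auto simp: sys_edges_def)
    have "fst e \<in> set p" using pe_in[OF p(2)] by simp
    moreover have "last q \<in> set q" using ps_facts[OF ps q] by auto
    ultimately have "p = q" using ps_same[OF ps p(1) q] eqx by auto
    then have "last p \<in> set (butlast p)" using pe_fst p eqx by (metis image_eqI)
    moreover have "distinct p" "p \<noteq> []" using ps_facts[OF ps p(1)] by auto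
    ultimately show False
      by (metis append_butlast_last_id distinct_append distinct1_rotate rotate1.simps(2) not_distinct_conv_prefix)
  qed
  have inj1: "inj_on last {q\<in>Q. last q \<in> A}"
  proof (rule inj_onI)
    fix q1 q2 assume "q1 \<in> {q\<in>Q. last q \<in> A}" "q2 \<in> {q\<in>Q. last q \<in> A}" "last q1 = last q2"
    then show "q1 = q2" using ps_facts[OF ps] ps_same[OF ps] by (metis (no_types, lifting) last_in_set mem_Collect_eq)
  qed
  have inj2: "inj_on fst {e\<in>?F. fst e \<in> A}"
  proof (rule inj_onI)
    fix e1 e2 assume a: "e1 \<in> {e\<in>?F. fst e \<in> A}" "e2 \<in> {e\<in>?F. fst e \<in> A}" "fst e1 = fst e2"
    then obtain p1 p2 where p: "p1 \<in> Q" "e1 \<in> path_edges p1" "p2 \<in> Q" "e2 \<in> path_edges p2"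
      by (auto simp: sys_edges_def)
    then have "p1 = p2" using pe_in ps_same[OF ps] a(3) by metis
    then show "e1 = e2" using inj_fst_zip[of p1 "tl p1"] ps_facts[OF ps p(1)] p a(3)
      by (auto simp: path_edges_def inj_on_def)
  qed
  show ?thesis
    unfolding eq
    apply (subst card_Un_disjoint)
    using fQ fF disj inj1 inj2 by (auto simp: card_image)
qed

lemma card_hd:
  assumes ps: "path_system V E Q" and fin: "finite V"
  shows "card (A \<inter> sys_vertices Q) = card {q\<in>Q. hd q \<in> A} + card {e\<in>sys_edges Q. snd e \<in> A}"
proof -
  let ?F = "sys_edges Q"
  have fQ: "finite Q" using ps_finite[OF ps fin] .
  have fF: "finite ?F" using ps_edges_finite[OF ps fin] .
  have eq: "A \<inter> sys_vertices Q = hd ` {q\<in>Q. hd q \<in> A} \<union> snd ` {e\<in>?F. snd e \<in> A}"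
  proof
    show "A \<inter> sys_vertices Q \<subseteq> hd ` {q\<in>Q. hd q \<in> A} \<union> snd ` {e\<in>?F. snd e \<in> A}"
    proof
      fix x assume x: "x \<in> A \<inter> sys_vertices Q"
      then obtain p where p: "p \<in> Q" "x \<in> set p" by (auto simp: sys_vertices_def)
      have ne: "p \<noteq> []" using ps_facts[OF ps p(1)] by auto
      show "x \<in> hd ` {q\<in>Q. hd q \<in> A} \<union> snd ` {e\<in>?F. snd e \<in> A}"
      proof (cases "x = hd p")
        case True then show ?thesis using x p by auto
      next
        case False
        then have "x \<in> set (tl p)" using p ne by (cases p) auto
        then obtain e where "e \<in> path_edges p" "snd e = x" using pe_snd by (metis imageE)
        then show ?thesis using x p by (force simp: sys_edges_def)
      qed
    qed
    show "hd ` {q\<in>Q. hd q \<in> A} \<union> snd ` {e\<in>?F. snd e \<in> A} \<subseteq> A \<inter> sys_vertices Q"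
    proof
      fix x assume "x \<in> hd ` {q\<in>Q. hd q \<in> A} \<union> snd ` {e\<in>?F. snd e \<in> A}"
      then consider (a) q where "q \<in> Q" "x = hd q" "x \<in> A" | (b) e where "e \<in> ?F" "x = snd e" "x \<in> A" by blast
      then show "x \<in> A \<inter> sys_vertices Q"
      proof cases
        case a
        then have "x \<in> set q" using ps_facts(1)[OF ps a(1)] by simp
        then show ?thesis using a unfolding sys_vertices_def by blast
      next
        case b
        then obtain p where "p \<in> Q" "e \<in> path_edges p" unfolding sys_edges_def by blast
        then have "x \<in> set p" using pe_in[OF \<open>e \<in> path_edges p\<close>] b(2) by simp
        then show ?thesis using b \<open>p \<in> Q\<close> unfolding sys_vertices_def by blast
      qed
    qed
  qed
  have disj: "hd ` {q\<in>Q. hd q \<in> A} \<inter> snd ` {e\<in>?F. snd e \<in> A} = {}"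
  proof (rule ccontr)
    assume "\<not> ?thesis"
    then obtain q e p where q: "q \<in> Q" and p: "p \<in> Q" "e \<in> path_edges p" and eqx: "hd q = snd e"
      by (auto simp: sys_edges_def)
    have "snd e \<in> set p" using pe_in[OF p(2)] by simp
    moreover have "hd q \<in> set q" using ps_facts[OF ps q] by auto
    ultimately have "p = q" using ps_same[OF ps p(1) q] eqx by auto
    then have "hd p \<in> set (tl p)" using pe_snd p eqx by (metis image_eqI)
    moreover have "distinct p" "p \<noteq> []" using ps_facts[OF ps p(1)] by auto
    ultimately show False by (cases p) auto
  qed
  have inj1: "inj_on hd {q\<in>Q. hd q \<in> A}"
  proof (rule inj_onI)
    fix q1 q2 assume "q1 \<in> {q\<in>Q. hd q \<in> A}" "q2 \<in> {q\<in>Q. hd q \<in> A}" "hd q1 = hd q2"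
    then show "q1 = q2" using ps_facts[OF ps] ps_same[OF ps] by (metis (no_types, lifting) hd_in_set mem_Collect_eq)
  qed
  have inj2: "inj_on snd {e\<in>?F. snd e \<in> A}"
  proof (rule inj_onI)
    fix e1 e2 assume a: "e1 \<in> {e\<in>?F. snd e \<in> A}" "e2 \<in> {e\<in>?F. snd e \<in> A}" "snd e1 = snd e2"
    then obtain p1 p2 where p: "p1 \<in> Q" "e1 \<in> path_edges p1" "p2 \<in> Q" "e2 \<in> path_edges p2"
      by (auto simp: sys_edges_def)
    then have "p1 = p2" using pe_in ps_same[OF ps] a(3) by metis
    then show "e1 = e2" using inj_snd_zip[of "tl p1" p1] ps_facts[OF ps p(1)] p a(3)
      by (auto simp: path_edges_def inj_on_def distinct_tl)
  qed
  show ?thesis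
    unfolding eq
    apply (subst card_Un_disjoint)
    using fQ fF disj inj1 inj2 by (auto simp: card_image)
qed

lemma row_disj: "k2_partition V k P \<Longrightarrow> i\<in>{1..k} \<Longrightarrow> i'\<in>{1..k} \<Longrightarrow> i \<noteq> i'
  \<Longrightarrow> rowset P k i \<inter> rowset P k i' = {}"
  unfolding k2_partition_def rowset_def by blast

lemma col_disj: "k2_partition V k P \<Longrightarrow> i\<in>{1..k} \<Longrightarrow> i'\<in>{1..k} \<Longrightarrow> i \<noteq> i'
  \<Longrightarrow> colset P k i \<inter> colset P k i' = {}"
  unfolding k2_partition_def colset_def by blast

lemma V_row: "k2_partition V k P \<Longrightarrow> x \<in> V \<Longrightarrow> \<exists>i\<in>{1..k}. x \<in> rowset P k i"
  unfolding k2_partition_def rowset_def by blast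

lemma V_col: "k2_partition V k P \<Longrightarrow> x \<in> V \<Longrightarrow> \<exists>i\<in>{1..k}. x \<in> colset P k i"
  unfolding k2_partition_def colset_def by blast

lemma row_sub: "k2_partition V k P \<Longrightarrow> i\<in>{1..k} \<Longrightarrow> rowset P k i \<subseteq> V"
  unfolding k2_partition_def rowset_def by blast

lemma col_sub: "k2_partition V k P \<Longrightarrow> i\<in>{1..k} \<Longrightarrow> colset P k i \<subseteq> V"
  unfolding k2_partition_def colset_def by blast

lemma out_count:
  assumes kp: "k2_partition V k P" and i: "i \<in> {1..k}" and fF: "finite F"
    and bad: "F \<subseteq> bad_edges E k P"
  shows "card {e\<in>F. fst e \<in> rowset P k i} = (\<Sum>j\<in>{1..k} - {i}. card (F \<inter> Eset E (rowset P k i) (colset P k j)))"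
proof -
  have eq: "{e\<in>F. fst e \<in> rowset P k i} = (\<Union>j\<in>{1..k} - {i}. F \<inter> Eset E (rowset P k i) (colset P k j))"
  proof
    show "{e\<in>F. fst e \<in> rowset P k i} \<subseteq> (\<Union>j\<in>{1..k} - {i}. F \<inter> Eset E (rowset P k i) (colset P k j))"
    proof
      fix e assume e: "e \<in> {e\<in>F. fst e \<in> rowset P k i}"
      then have "e \<in> bad_edges E k P" using bad by blast
      then obtain i' j' where ij: "i' \<in> {1..k}" "j' \<in> {1..k} - {i'}" "e \<in> Eset E (rowset P k i') (colset P k j')"
        unfolding bad_edges_def by blast
      have "fst e \<in> rowset P k i'" using ij(3) by (auto simp: Eset_def)
      then have "i' = i" using row_disj[OF kp i ij(1)] e by blast
      then show "e \<in> (\<Union>j\<in>{1..k} - {i}. F \<inter> Eset E (rowset P k i) (colset P k j))"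
        using ij e by blast
    qed
  qed (auto simp: Eset_def)
  show ?thesis unfolding eq
  proof (rule card_UN_disjoint)
    show "finite ({1..k} - {i})" by simp
    show "\<forall>j\<in>{1..k} - {i}. finite (F \<inter> Eset E (rowset P k i) (colset P k j))" using fF by blast
    show "\<forall>j\<in>{1..k} - {i}. \<forall>j'\<in>{1..k} - {i}. j \<noteq> j' \<longrightarrow> (F \<inter> Eset E (rowset P k i) (colset P k j)) \<inter> (F \<inter> Eset E (rowset P k i) (colset P k j')) = {}"
    proof (intro ballI impI)
      fix j j' assume "j \<in> {1..k} - {i}" "j' \<in> {1..k} - {i}" "j \<noteq> j'"
      then have "colset P k j \<inter> colset P k j' = {}"
        using col_disj[OF kp, of j j'] by blast
      then show "(F \<inter> Eset E (rowset P k i) (colset P k j)) \<inter> (F \<inter> Eset E (rowset P k i) (colset P k j')) = {}" unfolding Eset_def by blast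
    qed
  qed
qed

lemma in_count:
  assumes kp: "k2_partition V k P" and i: "i \<in> {1..k}" and fF: "finite F"
    and bad: "F \<subseteq> bad_edges E k P"
  shows "card {e\<in>F. snd e \<in> colset P k i} = (\<Sum>j\<in>{1..k} - {i}. card (F \<inter> Eset E (rowset P k j) (colset P k i)))"
proof -
  have eq: "{e\<in>F. snd e \<in> colset P k i} = (\<Union>j\<in>{1..k} - {i}. F \<inter> Eset E (rowset P k j) (colset P k i))"
  proof
    show "{e\<in>F. snd e \<in> colset P k i} \<subseteq> (\<Union>j\<in>{1..k} - {i}. F \<inter> Eset E (rowset P k j) (colset P k i))"
    proof
      fix e assume e: "e \<in> {e\<in>F. snd e \<in> colset P k i}"
      then have "e \<in> bad_edges E k P" using bad by blast
      then obtain i' j' where ij: "i' \<in> {1..k}" "j' \<in> {1..k} - {i'}" "e \<in> Eset E (rowset P k i') (colset P k j')"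
        unfolding bad_edges_def by blast
      have "snd e \<in> colset P k j'" using ij(3) by (auto simp: Eset_def)
      then have "j' = i" using col_disj[OF kp i] ij(2) e by blast
      then show "e \<in> (\<Union>j\<in>{1..k} - {i}. F \<inter> Eset E (rowset P k j) (colset P k i))"
        using ij e by blast
    qed
  qed (auto simp: Eset_def)
  show ?thesis unfolding eq
  proof (rule card_UN_disjoint)
    show "finite ({1..k} - {i})" by simp
    show "\<forall>j\<in>{1..k} - {i}. finite (F \<inter> Eset E (rowset P k j) (colset P k i))" using fF by blast
    show "\<forall>j\<in>{1..k} - {i}. \<forall>j'\<in>{1..k} - {i}. j \<noteq> j' \<longrightarrow> (F \<inter> Eset E (rowset P k j) (colset P k i)) \<inter> (F \<inter> Eset E (rowset P k j') (colset P k i)) = {}"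
    proof (intro ballI impI)
      fix j j' assume "j \<in> {1..k} - {i}" "j' \<in> {1..k} - {i}" "j \<noteq> j'"
      then have "rowset P k j \<inter> rowset P k j' = {}"
        using row_disj[OF kp, of j j'] by blast
      then show "(F \<inter> Eset E (rowset P k j) (colset P k i)) \<inter> (F \<inter> Eset E (rowset P k j') (colset P k i)) = {}" unfolding Eset_def by blast
    qed
  qed
qed

lemma new_row:
  assumes kp: "k2_partition V k P" and ps: "path_system V E Q"
  shows "rowset (contr_part k P Q) k i = Inl ` (rowset P k i - sys_vertices Q) \<union> Inr ` {q\<in>Q. last q \<in> rowset P k i}"
proof (intro equalityI subsetI)
  fix x assume "x \<in> rowset (contr_part k P Q) k i"
  then obtain j where j: "j \<in> {1..k}" "x \<in> contr_part k P Q i j" unfolding rowset_def by blast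
  then consider (a) v where "x = Inl v" "v \<in> P i j - sys_vertices Q"
    | (b) q where "x = Inr q" "q \<in> Q" "last q \<in> rowset P k i"
    unfolding contr_part_def by blast
  then show "x \<in> Inl ` (rowset P k i - sys_vertices Q) \<union> Inr ` {q\<in>Q. last q \<in> rowset P k i}"
  proof cases
    case a then show ?thesis using j(1) unfolding rowset_def by blast
  next
    case b then show ?thesis by blast
  qed
next
  fix x assume "x \<in> Inl ` (rowset P k i - sys_vertices Q) \<union> Inr ` {q\<in>Q. last q \<in> rowset P k i}"
  then consider (a) v where "x = Inl v" "v \<in> rowset P k i - sys_vertices Q"
    | (b) q where "x = Inr q" "q \<in> Q" "last q \<in> rowset P k i" by blast
  then show "x \<in> rowset (contr_part k P Q) k i"
  proof cases
    case a
    then obtain j where "j \<in> {1..k}" "v \<in> P i j" unfolding rowset_def by blast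
    then show ?thesis using a unfolding rowset_def contr_part_def by blast
  next
    case b
    have "hd q \<in> V" using ps_facts[OF ps b(2)] by auto
    then obtain j where "j \<in> {1..k}" "hd q \<in> colset P k j" using V_col[OF kp] by blast
    then have "x \<in> contr_part k P Q i j" using b unfolding contr_part_def by blast
    then show ?thesis using \<open>j \<in> {1..k}\<close> unfolding rowset_def by blast
  qed
qed

lemma new_col:
  assumes kp: "k2_partition V k P" and ps: "path_system V E Q"
  shows "colset (contr_part k P Q) k i = Inl ` (colset P k i - sys_vertices Q) \<union> Inr ` {q\<in>Q. hd q \<in> colset P k i}"
proof (intro equalityI subsetI)
  fix x assume "x \<in> colset (contr_part k P Q) k i"
  then obtain j where j: "j \<in> {1..k}" "x \<in> contr_part k P Q j i" unfolding colset_def by blast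
  then consider (a) v where "x = Inl v" "v \<in> P j i - sys_vertices Q"
    | (b) q where "x = Inr q" "q \<in> Q" "hd q \<in> colset P k i"
    unfolding contr_part_def by blast
  then show "x \<in> Inl ` (colset P k i - sys_vertices Q) \<union> Inr ` {q\<in>Q. hd q \<in> colset P k i}"
  proof cases
    case a then show ?thesis using j(1) unfolding colset_def by blast
  next
    case b then show ?thesis by blast
  qed
next
  fix x assume "x \<in> Inl ` (colset P k i - sys_vertices Q) \<union> Inr ` {q\<in>Q. hd q \<in> colset P k i}"
  then consider (a) v where "x = Inl v" "v \<in> colset P k i - sys_vertices Q"
    | (b) q where "x = Inr q" "q \<in> Q" "hd q \<in> colset P k i" by blast
  then show "x \<in> colset (contr_part k P Q) k i"
  proof cases
    case a
    then obtain j where "j \<in> {1..k}" "v \<in> P j i" unfolding colset_def by blast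
    then show ?thesis using a unfolding colset_def contr_part_def by blast
  next
    case b
    have "last q \<in> V" using ps_facts[OF ps b(2)] by auto
    then obtain j where "j \<in> {1..k}" "last q \<in> rowset P k j" using V_row[OF kp] by blast
    then have "x \<in> contr_part k P Q j i" using b unfolding contr_part_def by blast
    then show ?thesis using \<open>j \<in> {1..k}\<close> unfolding colset_def by blast
  qed
qed

lemma card_split:
  assumes "finite A" shows "card A = card (A - B) + card (A \<inter> B)"
proof -
  have "card ((A - B) \<union> (A \<inter> B)) = card (A - B) + card (A \<inter> B)"
    by (rule card_Un_disjoint) (use assms in auto)
  moreover have "(A - B) \<union> (A \<inter> B) = A" by blast
  ultimately show ?thesis by simp
qed

theorem lemma4p10:
  fixes V :: "'a set" and E :: "('a \<times> 'a) set" and k :: nat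
    and P :: "nat \<Rightarrow> nat \<Rightarrow> 'a set" and Q :: "'a list set"
  assumes "finite V" and "E \<subseteq> V \<times> V"
    and "k2_partition V k P"
    and "path_system V E Q"
    and "sys_edges Q \<subseteq> bad_edges E k P"
    and "\<forall>i\<in>{1..k}.
           (\<Sum>j\<in>{1..k} - {i}. int (card (sys_edges Q \<inter> Eset E (rowset P k i) (colset P k j))))
         - (\<Sum>j\<in>{1..k} - {i}. int (card (sys_edges Q \<inter> Eset E (rowset P k j) (colset P k i))))
         = int (card (rowset P k i)) - int (card (colset P k i))"
  shows "contr_E V E Q \<subseteq> contr_V V Q \<times> contr_V V Q
       \<and> k2_partition (contr_V V Q) k (contr_part k P Q)
       \<and> (\<forall>i\<in>{1..k}. card (rowset (contr_part k P Q) k i) = card (colset (contr_part k P Q) k i))"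
proof (intro conjI ballI)
  note kp = assms(3) and ps = assms(4) and fin = assms(1)
  let ?S = "sys_vertices Q" and ?F = "sys_edges Q"
  have fQ: "finite Q" using ps_finite[OF ps fin] .
  have fF: "finite ?F" using ps_edges_finite[OF ps fin] .
  show "contr_E V E Q \<subseteq> contr_V V Q \<times> contr_V V Q" unfolding contr_E_def by blast
  show "k2_partition (contr_V V Q) k (contr_part k P Q)"
    unfolding k2_partition_def
  proof (intro conjI ballI impI)
    fix i j i' j' assume r: "i \<in> {1..k}" "j \<in> {1..k}" "i' \<in> {1..k}" "j' \<in> {1..k}" "(i, j) \<noteq> (i', j')"
    have d1: "P i j \<inter> P i' j' = {}" using kp r unfolding k2_partition_def by blast
    have d2: "False" if "hd q \<in> colset P k j" "last q \<in> rowset P k i" "hd q \<in> colset P k j'" "last q \<in> rowset P k i'" for q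
    proof (cases "i = i'")
      case True
      then have "j \<noteq> j'" using r(5) by auto
      then show False using col_disj[OF kp r(2) r(4)] that by blast
    next
      case False
      then show False using row_disj[OF kp r(1) r(3)] that by blast
    qed
    show "contr_part k P Q i j \<inter> contr_part k P Q i' j' = {}"
    proof (rule ccontr)
      assume "contr_part k P Q i j \<inter> contr_part k P Q i' j' \<noteq> {}"
      then obtain x where x: "x \<in> contr_part k P Q i j" "x \<in> contr_part k P Q i' j'" by blast
      show False
      proof (cases x)
        case (Inl v)
        then have "v \<in> P i j" "v \<in> P i' j'" using x unfolding contr_part_def by auto
        then show False using d1 by blast
      next
        case (Inr q)
        then show False using x d2[of q] unfolding contr_part_def by auto
      qed
    qed
  next
    have U: "(\<Union>i\<in>{1..k}. \<Union>j\<in>{1..k}. P i j) = V" using kp unfolding k2_partition_def by blast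
    show "(\<Union>i\<in>{1..k}. \<Union>j\<in>{1..k}. contr_part k P Q i j) = contr_V V Q"
    proof (intro equalityI subsetI)
      fix x assume "x \<in> (\<Union>i\<in>{1..k}. \<Union>j\<in>{1..k}. contr_part k P Q i j)"
      then obtain i j where ij: "i \<in> {1..k}" "j \<in> {1..k}" "x \<in> contr_part k P Q i j" by blast
      show "x \<in> contr_V V Q"
      proof (cases x)
        case (Inl v)
        then have "v \<in> P i j - ?S" using ij(3) unfolding contr_part_def by auto
        then have "v \<in> V - ?S" using U ij by blast
        then show ?thesis using Inl unfolding contr_V_def by blast
      next
        case (Inr q)
        then have "q \<in> Q" using ij(3) unfolding contr_part_def by auto
        then show ?thesis using Inr unfolding contr_V_def by blast
      qed
    next
      fix x assume x: "x \<in> contr_V V Q"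
      show "x \<in> (\<Union>i\<in>{1..k}. \<Union>j\<in>{1..k}. contr_part k P Q i j)"
      proof (cases x)
        case (Inl v)
        then have v: "v \<in> V - ?S" using x unfolding contr_V_def by auto
        then obtain i j where ij: "i \<in> {1..k}" "j \<in> {1..k}" "v \<in> P i j" using U by blast
        then have "x \<in> contr_part k P Q i j" using v Inl unfolding contr_part_def by blast
        then show ?thesis using ij by blast
      next
        case (Inr q)
        then have q: "q \<in> Q" using x unfolding contr_V_def by auto
        have "hd q \<in> V" "last q \<in> V" using ps_facts[OF ps q] by auto
        then obtain i j where ij: "i \<in> {1..k}" "j \<in> {1..k}" "hd q \<in> colset P k j" "last q \<in> rowset P k i"
          using V_row[OF kp] V_col[OF kp] by metis
        then have "x \<in> contr_part k P Q i j" using q Inr unfolding contr_part_def by blast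
        then show ?thesis using ij by blast
      qed
    qed
  qed
  fix i assume i: "i \<in> {1..k}"
  have fr: "finite (rowset P k i)" using row_sub[OF kp i] fin finite_subset by blast
  have fc: "finite (colset P k i)" using col_sub[OF kp i] fin finite_subset by blast
  have r1: "card (rowset (contr_part k P Q) k i) = card (rowset P k i - ?S) + card {q\<in>Q. last q \<in> rowset P k i}"
    unfolding new_row[OF kp ps]
    apply (subst card_Un_disjoint)
    using fr fQ by (auto simp: card_image)
  have c1: "card (colset (contr_part k P Q) k i) = card (colset P k i - ?S) + card {q\<in>Q. hd q \<in> colset P k i}"
    unfolding new_col[OF kp ps]
    apply (subst card_Un_disjoint)
    using fc fQ by (auto simp: card_image)
  define a where "a = (\<Sum>j\<in>{1..k} - {i}. card (?F \<inter> Eset E (rowset P k i) (colset P k j)))"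
  define b where "b = (\<Sum>j\<in>{1..k} - {i}. card (?F \<inter> Eset E (rowset P k j) (colset P k i)))"
  have r2: "card (rowset P k i) = card (rowset P k i - ?S) + card {q\<in>Q. last q \<in> rowset P k i} + a"
    using card_split[OF fr, of ?S] card_last[OF ps fin, of "rowset P k i"] out_count[OF kp i fF assms(5)]
    unfolding a_def by linarith
  have c2: "card (colset P k i) = card (colset P k i - ?S) + card {q\<in>Q. hd q \<in> colset P k i} + b"
    using card_split[OF fc, of ?S] card_hd[OF ps fin, of "colset P k i"] in_count[OF kp i fF assms(5)]
    unfolding b_def by linarith
  have h6: "int a - int b = int (card (rowset P k i)) - int (card (colset P k i))"
    using assms(6) i unfolding a_def b_def of_nat_sum by blast
  have "int (card (rowset (contr_part k P Q) k i)) = int (card (colset (contr_part k P Q) k i))"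
    using h6 r1 c1 r2 c2 by linarith
  then show "card (rowset (contr_part k P Q) k i) = card (colset (contr_part k P Q) k i)" by simp
qed

end
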